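(* Let $k$ be a field of characteristic $0$, $B$ a $k$-algebra, $A$ a $B$-algebra equipped with a $B$-linear double bracket $\{\!\{-,-\}\!\}$, and let $e\in B$ be an idempotent with $BeB=B$. Write $1=\sum_ip_ieq_i$ with $p_i,q_i\in B$ and define $\operatorname{Tr}:A\to eAe$, $\operatorname{Tr}(a)=\sum_ieq_iap_ie$. Then for all $a,b\in A$, \[\operatorname{Tr}\{a,b\}=\{\operatorname{Tr}(a),\operatorname{Tr}(b)\},\] where $\{x,y\}=\{\!\{x,y\}\!\}'\{\!\{x,y\}\!\}''$ is the associated bracket.
   Context: A $B$-algebra is a $k$-algebra $A$ with a $k$-algebra map $B\to A$. Unadorned tensor products are over $k$; $x\in A\otimes A$ is written $x'\otimes x''$ (summation suppressed), $x^\circ=x''\otimes x'$. A double bracket on $A$ is a bilinear map $\{\!\{-,-\}\!\}:A\times A\to A\otimes A$ with $\{\!\{a,bc\}\!\}=b\{\!\{a,c\}\!\}+\{\!\{a,b\}\!\}c$ (outer bimodule structure $b(x\otimes y)c=bx\otimes yc$) and $\{\!\{a,b\}\!\}=-\{\!\{b,a\}\!\}^\circ$; it is $B$-linear if it vanishes whenever its second argument lies in the image of $B$. *)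

theory Defs
  imports Main "HOL.Vector_Spaces"
begin

definition k_algebra :: "('k::field \<Rightarrow> 'a::ring_1 \<Rightarrow> 'a) \<Rightarrow> bool" where
  "k_algebra sc \<longleftrightarrow> vector_space sc \<and>
     (\<forall>s x y. sc s (x * y) = sc s x * y \<and> sc s (x * y) = x * sc s y)"

definition k_alg_hom ::
  "('k::field \<Rightarrow> 'b::ring_1 \<Rightarrow> 'b) \<Rightarrow> ('k \<Rightarrow> 'a::ring_1 \<Rightarrow> 'a) \<Rightarrow> ('b \<Rightarrow> 'a) \<Rightarrow> bool" where
  "k_alg_hom sB sA f \<longleftrightarrow> Vector_Spaces.linear sB sA f \<and> f 1 = 1 \<and> (\<forall>x y. f (x * y) = f x * f y)"

text \<open>A \<otimes>_k A is realised as the free k-vector space on A \<times> A (finitely supported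
  functions A \<times> A \<Rightarrow> k) modulo the subspace tensor_rel generated by the bilinearity
  relations. Elements of A \<otimes> A are represented by elements of the free space, and equality
  in A \<otimes> A is the relation teq (difference lies in tensor_rel).\<close>

definition fsupp :: "('a \<times> 'a \<Rightarrow> 'k::zero) \<Rightarrow> ('a \<times> 'a) set" where
  "fsupp f = {p. f p \<noteq> 0}"

definition tdelta :: "'a \<Rightarrow> 'a \<Rightarrow> ('a \<times> 'a \<Rightarrow> 'k::{zero,one})" where
  "tdelta u v = (\<lambda>p. if p = (u, v) then 1 else 0)"

definition tscale :: "'k::times \<Rightarrow> ('a \<times> 'a \<Rightarrow> 'k) \<Rightarrow> ('a \<times> 'a \<Rightarrow> 'k)" where
  "tscale s f = (\<lambda>p. s * f p)"

definition tadd :: "('a \<times> 'a \<Rightarrow> 'k::plus) \<Rightarrow> ('a \<times> 'a \<Rightarrow> 'k) \<Rightarrow> ('a \<times> 'a \<Rightarrow> 'k)" where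
  "tadd f g = (\<lambda>p. f p + g p)"

definition tzero :: "'a \<times> 'a \<Rightarrow> 'k::zero" where
  "tzero = (\<lambda>p. 0)"

inductive_set tensor_rel :: "('k::field \<Rightarrow> 'a::ring_1 \<Rightarrow> 'a) \<Rightarrow> ('a \<times> 'a \<Rightarrow> 'k) set"
  for sA :: "'k::field \<Rightarrow> 'a::ring_1 \<Rightarrow> 'a" where
  zero: "tzero \<in> tensor_rel sA"
| add: "f \<in> tensor_rel sA \<Longrightarrow> g \<in> tensor_rel sA \<Longrightarrow> tadd f g \<in> tensor_rel sA"
| scale: "f \<in> tensor_rel sA \<Longrightarrow> tscale s f \<in> tensor_rel sA"
| addl: "(\<lambda>p. tdelta (x + x') y p - tdelta x y p - tdelta x' y p) \<in> tensor_rel sA"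
| addr: "(\<lambda>p. tdelta x (y + y') p - tdelta x y p - tdelta x y' p) \<in> tensor_rel sA"
| scalel: "(\<lambda>p. tdelta (sA s x) y p - s * tdelta x y p) \<in> tensor_rel sA"
| scaler: "(\<lambda>p. tdelta x (sA s y) p - s * tdelta x y p) \<in> tensor_rel sA"

definition teq :: "('k::field \<Rightarrow> 'a::ring_1 \<Rightarrow> 'a) \<Rightarrow> ('a \<times> 'a \<Rightarrow> 'k) \<Rightarrow> ('a \<times> 'a \<Rightarrow> 'k) \<Rightarrow> bool" where
  "teq sA f g \<longleftrightarrow> (\<lambda>p. f p - g p) \<in> tensor_rel sA"

text \<open>Outer bimodule structure: b (x \<otimes> y) = bx \<otimes> y and (x \<otimes> y) c = x \<otimes> yc,
  extended linearly.\<close>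
definition tlmult :: "'a::ring_1 \<Rightarrow> ('a \<times> 'a \<Rightarrow> 'k::field) \<Rightarrow> ('a \<times> 'a \<Rightarrow> 'k)" where
  "tlmult c f = (\<lambda>q. \<Sum>p\<in>fsupp f. f p * tdelta (c * fst p) (snd p) q)"

definition trmult :: "('a::ring_1 \<times> 'a \<Rightarrow> 'k::field) \<Rightarrow> 'a \<Rightarrow> ('a \<times> 'a \<Rightarrow> 'k)" where
  "trmult f c = (\<lambda>q. \<Sum>p\<in>fsupp f. f p * tdelta (fst p) (snd p * c) q)"

definition tflip :: "('a \<times> 'a \<Rightarrow> 'k) \<Rightarrow> ('a \<times> 'a \<Rightarrow> 'k)" where
  "tflip f = (\<lambda>(u, v). f (v, u))"

definition tmult :: "('k::field \<Rightarrow> 'a::ring_1 \<Rightarrow> 'a) \<Rightarrow> ('a \<times> 'a \<Rightarrow> 'k) \<Rightarrow> 'a" where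
  "tmult sA f = (\<Sum>p\<in>fsupp f. sA (f p) (fst p * snd p))"

definition double_bracket ::
  "('k::field \<Rightarrow> 'a::ring_1 \<Rightarrow> 'a) \<Rightarrow> ('a \<Rightarrow> 'a \<Rightarrow> ('a \<times> 'a \<Rightarrow> 'k)) \<Rightarrow> bool" where
  "double_bracket sA D \<longleftrightarrow>
     (\<forall>a b. finite (fsupp (D a b))) \<and>
     (\<forall>a a' b. teq sA (D (a + a') b) (tadd (D a b) (D a' b))) \<and>
     (\<forall>a b b'. teq sA (D a (b + b')) (tadd (D a b) (D a b'))) \<and>
     (\<forall>s a b. teq sA (D (sA s a) b) (tscale s (D a b))) \<and>
     (\<forall>s a b. teq sA (D a (sA s b)) (tscale s (D a b))) \<and>
     (\<forall>a b c. teq sA (D a (b * c)) (tadd (tlmult b (D a c)) (trmult (D a b) c))) \<and>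
     (\<forall>a b. teq sA (D a b) (tscale (-1) (tflip (D b a))))"

text \<open>B-linearity: the bracket vanishes (in A \<otimes> A) when its second argument is in the image of B.\<close>
definition B_linear_dbr ::
  "('k::field \<Rightarrow> 'a::ring_1 \<Rightarrow> 'a) \<Rightarrow> ('b \<Rightarrow> 'a) \<Rightarrow> ('a \<Rightarrow> 'a \<Rightarrow> ('a \<times> 'a \<Rightarrow> 'k)) \<Rightarrow> bool" where
  "B_linear_dbr sA \<phi> D \<longleftrightarrow> (\<forall>a c. teq sA (D a (\<phi> c)) tzero)"

definition assoc_bracket ::
  "('k::field \<Rightarrow> 'a::ring_1 \<Rightarrow> 'a) \<Rightarrow> ('a \<Rightarrow> 'a \<Rightarrow> ('a \<times> 'a \<Rightarrow> 'k)) \<Rightarrow> 'a \<Rightarrow> 'a \<Rightarrow> 'a" where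
  "assoc_bracket sA D x y = tmult sA (D x y)"

end

theory Submission
  imports Defs
begin

definition Lf :: "('k::field \<Rightarrow> 'a::ring_1 \<Rightarrow> 'a) \<Rightarrow> ('a \<times> 'a \<Rightarrow> 'a) \<Rightarrow> ('a \<times> 'a \<Rightarrow> 'k) \<Rightarrow> 'a" where
  "Lf sA H f = (\<Sum>p\<in>fsupp f. sA (f p) (H p))"

definition bilin :: "('k::field \<Rightarrow> 'a::ring_1 \<Rightarrow> 'a) \<Rightarrow> ('a \<times> 'a \<Rightarrow> 'a) \<Rightarrow> bool" where
  "bilin sA H \<longleftrightarrow> (\<forall>x x' y. H (x + x', y) = H (x, y) + H (x', y)) \<and>
     (\<forall>x y y'. H (x, y + y') = H (x, y) + H (x, y')) \<and>
     (\<forall>s x y. H (sA s x, y) = sA s (H (x, y))) \<and>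
     (\<forall>s x y. H (x, sA s y) = sA s (H (x, y)))"

locale kalg =
  fixes sA :: "'k::field \<Rightarrow> 'a::ring_1 \<Rightarrow> 'a"
  assumes kal: "k_algebra sA"
begin

lemma vs: "vector_space sA" using kal unfolding k_algebra_def by auto

interpretation V: vector_space sA by (rule vs)

lemma sA_mult: "sA s x * y = sA s (x * y)" "x * sA s y = sA s (x * y)"
  using kal unfolding k_algebra_def by metis+

lemma Lf_eq:
  assumes "finite S" "fsupp f \<subseteq> S"
  shows "Lf sA H f = (\<Sum>p\<in>S. sA (f p) (H p))"
  unfolding Lf_def
  by (rule sum.mono_neutral_left) (use assms in \<open>auto simp: fsupp_def\<close>)

lemma Lf_add:
  assumes "finite (fsupp f)" "finite (fsupp g)"
  shows "Lf sA H (\<lambda>q. f q + g q) = Lf sA H f + Lf sA H g"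
    and "finite (fsupp (\<lambda>q. f q + g q))"
proof -
  let ?S = "fsupp f \<union> fsupp g"
  have sub: "fsupp (\<lambda>q. f q + g q) \<subseteq> ?S" by (auto simp: fsupp_def)
  show "finite (fsupp (\<lambda>q. f q + g q))" using sub assms finite_subset by blast
  have "Lf sA H (\<lambda>q. f q + g q) = (\<Sum>p\<in>?S. sA (f p + g p) (H p))"
    using assms sub by (intro Lf_eq) auto
  also have "\<dots> = (\<Sum>p\<in>?S. sA (f p) (H p)) + (\<Sum>p\<in>?S. sA (g p) (H p))"
    by (simp add: V.scale_left_distrib sum.distrib)
  also have "\<dots> = Lf sA H f + Lf sA H g"
    using assms by (simp add: Lf_eq[of ?S f H] Lf_eq[of ?S g H])
  finally show "Lf sA H (\<lambda>q. f q + g q) = Lf sA H f + Lf sA H g" .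
qed

lemma Lf_diff:
  assumes "finite (fsupp f)" "finite (fsupp g)"
  shows "Lf sA H (\<lambda>q. f q - g q) = Lf sA H f - Lf sA H g"
    and "finite (fsupp (\<lambda>q. f q - g q))"
proof -
  let ?S = "fsupp f \<union> fsupp g"
  have sub: "fsupp (\<lambda>q. f q - g q) \<subseteq> ?S" by (auto simp: fsupp_def)
  show "finite (fsupp (\<lambda>q. f q - g q))" using sub assms finite_subset by blast
  have "Lf sA H (\<lambda>q. f q - g q) = (\<Sum>p\<in>?S. sA (f p - g p) (H p))"
    using assms sub by (intro Lf_eq) auto
  also have "\<dots> = (\<Sum>p\<in>?S. sA (f p) (H p)) - (\<Sum>p\<in>?S. sA (g p) (H p))"
    by (simp add: V.scale_left_diff_distrib sum_subtractf)
  also have "\<dots> = Lf sA H f - Lf sA H g"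
    using assms by (simp add: Lf_eq[of ?S f H] Lf_eq[of ?S g H])
  finally show "Lf sA H (\<lambda>q. f q - g q) = Lf sA H f - Lf sA H g" .
qed

lemma Lf_smul:
  assumes "finite (fsupp f)"
  shows "Lf sA H (\<lambda>q. s * f q) = sA s (Lf sA H f)"
    and "finite (fsupp (\<lambda>q. s * f q))"
proof -
  have sub: "fsupp (\<lambda>q. s * f q) \<subseteq> fsupp f" by (auto simp: fsupp_def)
  show "finite (fsupp (\<lambda>q. s * f q))" using sub assms finite_subset by blast
  have "Lf sA H (\<lambda>q. s * f q) = (\<Sum>p\<in>fsupp f. sA (s * f p) (H p))"
    using assms sub by (intro Lf_eq) auto
  also have "\<dots> = sA s (Lf sA H f)"
    by (simp add: Lf_def V.scale_sum_right)
  finally show "Lf sA H (\<lambda>q. s * f q) = sA s (Lf sA H f)" .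
qed

lemma fsupp_delta: "fsupp (tdelta u v :: 'a \<times> 'a \<Rightarrow> 'k) = {(u, v)}"
  by (auto simp: fsupp_def tdelta_def)

lemma Lf_delta: "Lf sA H (tdelta u v) = H (u, v)"
  unfolding Lf_def fsupp_delta by (simp add: tdelta_def)

lemma Lf_tzero: "Lf sA H tzero = 0" and fsupp_tzero: "fsupp (tzero :: 'a \<times> 'a \<Rightarrow> 'k) = {}"
  by (auto simp: Lf_def fsupp_def tzero_def)

lemma Lf_sum_delta:
  assumes "finite F"
  shows "Lf sA H (\<lambda>q. \<Sum>p\<in>F. w p * tdelta (g1 p) (g2 p) q) = (\<Sum>p\<in>F. sA (w p) (H (g1 p, g2 p)))
    \<and> finite (fsupp (\<lambda>q. \<Sum>p\<in>F. w p * tdelta (g1 p) (g2 p) q))"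
  using assms
proof (induction F rule: finite_induct)
  case empty
  then show ?case by (simp add: Lf_def fsupp_def)
next
  case (insert x F)
  have fd: "finite (fsupp (\<lambda>q. w x * tdelta (g1 x) (g2 x) q))"
    using Lf_smul(2)[where f="tdelta (g1 x) (g2 x)" and s="w x"] by (simp add: fsupp_delta)
  have eq: "(\<lambda>q. \<Sum>p\<in>insert x F. w p * tdelta (g1 p) (g2 p) q) =
     (\<lambda>q. w x * tdelta (g1 x) (g2 x) q + (\<Sum>p\<in>F. w p * tdelta (g1 p) (g2 p) q))"
    using insert by auto
  show ?case unfolding eq
    using Lf_add(1)[OF fd conjunct2[OF insert.IH], of H] Lf_add(2)[OF fd conjunct2[OF insert.IH]] insert
      Lf_smul(1)[where f="tdelta (g1 x) (g2 x)" and H=H and s="w x"]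
    by (simp add: fsupp_delta Lf_delta)
qed

lemma Lf_tlmult:
  assumes "finite (fsupp f)"
  shows "Lf sA H (tlmult c f) = Lf sA (\<lambda>p. H (c * fst p, snd p)) f"
    and "finite (fsupp (tlmult c f))"
  using Lf_sum_delta[OF assms, of H f "\<lambda>p. c * fst p" snd]
  by (auto simp: tlmult_def Lf_def)

lemma Lf_trmult:
  assumes "finite (fsupp f)"
  shows "Lf sA H (trmult f c) = Lf sA (\<lambda>p. H (fst p, snd p * c)) f"
    and "finite (fsupp (trmult f c))"
  using Lf_sum_delta[OF assms, of H f fst "\<lambda>p. snd p * c"]
  by (auto simp: trmult_def Lf_def)

lemma fsupp_tflip: "fsupp (tflip f) = prod.swap ` fsupp f"
  by (auto simp: fsupp_def tflip_def image_iff)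

lemma Lf_tflip:
  shows "Lf sA H (tflip f) = Lf sA (\<lambda>p. H (snd p, fst p)) f"
    and "finite (fsupp f) \<Longrightarrow> finite (fsupp (tflip f))"
proof -
  show "Lf sA H (tflip f) = Lf sA (\<lambda>p. H (snd p, fst p)) f"
    unfolding Lf_def fsupp_tflip
    by (subst sum.reindex) (auto simp: tflip_def prod.swap_def)
  show "finite (fsupp f) \<Longrightarrow> finite (fsupp (tflip f))"
    by (simp add: fsupp_tflip)
qed

lemma Lf_Hsum: "Lf sA (\<lambda>p. \<Sum>i\<in>I. G i p) f = (\<Sum>i\<in>I. Lf sA (G i) f)"
  unfolding Lf_def V.scale_sum_right by (rule sum.swap)

lemma Lf_cd: "Lf sA (\<lambda>p. c * H p * d) f = c * Lf sA H f * d"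
  unfolding Lf_def by (simp add: sum_distrib_left sum_distrib_right sA_mult)

lemma tensor_rel_Lf:
  assumes "r \<in> tensor_rel sA" "bilin sA H"
  shows "finite (fsupp r) \<and> Lf sA H r = 0"
  using assms(1)
proof (induction rule: tensor_rel.induct)
  case zero
  then show ?case by (simp add: Lf_tzero fsupp_tzero)
next
  case (add f g)
  then show ?case using Lf_add(1)[of f g H] Lf_add(2)[of f g] by (simp add: tadd_def)
next
  case (scale f s)
  then show ?case using Lf_smul(1)[of f H s] Lf_smul(2)[of f s] by (simp add: tscale_def)
next
  case (addl x x' y)
  have f: "finite (fsupp (tdelta u v :: 'a \<times> 'a \<Rightarrow> 'k))" for u v by (simp add: fsupp_delta)
  show ?case
    using Lf_diff(1)[OF Lf_diff(2)[OF f f] f, of H] Lf_diff(2)[OF Lf_diff(2)[OF f f] f] Lf_diff(1)[OF f f, of H] assms(2)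
    by (simp add: Lf_delta bilin_def)
next
  case (addr x y y')
  have f: "finite (fsupp (tdelta u v :: 'a \<times> 'a \<Rightarrow> 'k))" for u v by (simp add: fsupp_delta)
  show ?case
    using Lf_diff(1)[OF Lf_diff(2)[OF f f] f, of H] Lf_diff(2)[OF Lf_diff(2)[OF f f] f] Lf_diff(1)[OF f f, of H] assms(2)
    by (simp add: Lf_delta bilin_def)
next
  case (scalel s x y)
  have f: "finite (fsupp (tdelta u v :: 'a \<times> 'a \<Rightarrow> 'k))" for u v by (simp add: fsupp_delta)
  show ?case
    using Lf_diff(1)[OF f Lf_smul(2)[OF f], of H] Lf_diff(2)[OF f Lf_smul(2)[OF f]] Lf_smul(1)[OF f, of H] assms(2)
    by (simp add: Lf_delta bilin_def)
next
  case (scaler s x y)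
  have f: "finite (fsupp (tdelta u v :: 'a \<times> 'a \<Rightarrow> 'k))" for u v by (simp add: fsupp_delta)
  show ?case
    using Lf_diff(1)[OF f Lf_smul(2)[OF f], of H] Lf_diff(2)[OF f Lf_smul(2)[OF f]] Lf_smul(1)[OF f, of H] assms(2)
    by (simp add: Lf_delta bilin_def)
qed

lemma Lf_resp:
  assumes "teq sA f g" "finite (fsupp f)" "finite (fsupp g)" "bilin sA H"
  shows "Lf sA H f = Lf sA H g"
  using tensor_rel_Lf[of "\<lambda>p. f p - g p" H] assms Lf_diff(1)[of f g H] Lf_diff(2)[of f g]
  by (simp add: teq_def)

lemma bilin_m: "bilin sA (\<lambda>p. fst p * snd p)"
  by (simp add: bilin_def algebra_simps sA_mult)

lemma bilin_comp:
  assumes "bilin sA H"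
  shows "bilin sA (\<lambda>p. H (a * fst p * b, c * snd p * d))"
  using assms by (simp add: bilin_def algebra_simps sA_mult)

lemma bilin_swap:
  assumes "bilin sA H"
  shows "bilin sA (\<lambda>p. H (snd p, fst p))"
  using assms by (simp add: bilin_def)

end


locale dbr = kalg sA for sA :: "'k::field \<Rightarrow> 'a::ring_1 \<Rightarrow> 'a" +
  fixes D :: "'a \<Rightarrow> 'a \<Rightarrow> ('a \<times> 'a \<Rightarrow> 'k)" and \<phi> :: "'b \<Rightarrow> 'a"
  assumes db: "double_bracket sA D" and bl: "B_linear_dbr sA \<phi> D"
begin

interpretation V: vector_space sA by (rule vs)

lemma finD: "finite (fsupp (D a b))"
  using db unfolding double_bracket_def by blast

lemma L2_add:
  assumes "bilin sA H"
  shows "Lf sA H (D x (y + y')) = Lf sA H (D x y) + Lf sA H (D x y')"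
proof -
  have "teq sA (D x (y + y')) (tadd (D x y) (D x y'))"
    using db unfolding double_bracket_def by blast
  then show ?thesis
    using Lf_resp[OF _ finD _ assms] Lf_add(1)[OF finD finD, of H] Lf_add(2)[OF finD finD] unfolding tadd_def by simp
qed

lemma L1_add:
  assumes "bilin sA H"
  shows "Lf sA H (D (x + x') y) = Lf sA H (D x y) + Lf sA H (D x' y)"
proof -
  have "teq sA (D (x + x') y) (tadd (D x y) (D x' y))"
    using db unfolding double_bracket_def by blast
  then show ?thesis
    using Lf_resp[OF _ finD _ assms] Lf_add(1)[OF finD finD, of H] Lf_add(2)[OF finD finD] unfolding tadd_def by simp
qed

lemma L2_sum:
  assumes "bilin sA H"
  shows "Lf sA H (D x (\<Sum>j<(n::nat). Y j)) = (\<Sum>j<n. Lf sA H (D x (Y j)))"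
proof (induction n)
  case 0
  have "Lf sA H (D x 0) = Lf sA H (D x 0) + Lf sA H (D x 0)"
    using L2_add[OF assms, of x 0 0] by simp
  then show ?case by simp
next
  case (Suc n)
  then show ?case by (simp add: L2_add[OF assms] add.commute)
qed

lemma L1_sum:
  assumes "bilin sA H"
  shows "Lf sA H (D (\<Sum>j<(n::nat). X j) y) = (\<Sum>j<n. Lf sA H (D (X j) y))"
proof (induction n)
  case 0
  have "Lf sA H (D 0 y) = Lf sA H (D 0 y) + Lf sA H (D 0 y)"
    using L1_add[OF assms, of 0 0 y] by simp
  then show ?case by simp
next
  case (Suc n)
  then show ?case by (simp add: L1_add[OF assms] add.commute)
qed

lemma L2_phi:
  assumes "bilin sA H"
  shows "Lf sA H (D x (\<phi> c)) = 0"
proof -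
  have "teq sA (D x (\<phi> c)) tzero" using bl unfolding B_linear_dbr_def by blast
  then show ?thesis using Lf_resp[OF _ finD _ assms] Lf_tzero fsupp_tzero by simp
qed

lemma L2_mult:
  assumes "bilin sA H"
  shows "Lf sA H (D x (y * z)) = Lf sA (\<lambda>p. H (y * fst p, snd p)) (D x z) + Lf sA (\<lambda>p. H (fst p, snd p * z)) (D x y)"
proof -
  have "teq sA (D x (y * z)) (tadd (tlmult y (D x z)) (trmult (D x y) z))"
    using db unfolding double_bracket_def by blast
  then show ?thesis
    using Lf_resp[OF _ finD _ assms] Lf_add(1)[OF Lf_tlmult(2)[OF finD] Lf_trmult(2)[OF finD], of H]
      Lf_add(2)[OF Lf_tlmult(2)[OF finD] Lf_trmult(2)[OF finD]]
      Lf_tlmult(1)[OF finD] Lf_trmult(1)[OF finD] unfolding tadd_def by simp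
qed

lemma L2_cd:
  assumes "bilin sA H"
  shows "Lf sA H (D x (\<phi> c * y * \<phi> d)) = Lf sA (\<lambda>p. H (\<phi> c * fst p, snd p * \<phi> d)) (D x y)"
proof -
  have b1: "bilin sA (\<lambda>p. H (a * fst p, snd p * b))" for a b
    using bilin_comp[OF assms, of a 1 1 b] by simp
  have b2: "bilin sA (\<lambda>p. H (a * fst p * b, c * snd p * d))" for a b c d
    using bilin_comp[OF assms] by simp
  have "Lf sA H (D x (\<phi> c * y * \<phi> d)) = Lf sA (\<lambda>p. H (fst p, snd p * \<phi> d)) (D x (\<phi> c * y))"
    using L2_mult[OF assms, of x "\<phi> c * y" "\<phi> d"] L2_phi[OF b1[of "\<phi> c * y" 1]] by simp
  also have "\<dots> = Lf sA (\<lambda>p. H (\<phi> c * fst p, snd p * \<phi> d)) (D x y)"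
    using L2_mult[OF b1[of 1 "\<phi> d"], of x "\<phi> c" y] L2_phi[OF b1[of 1 "y * \<phi> d"]]
    by (simp add: mult.assoc)
  finally show ?thesis .
qed

lemma L_skew:
  assumes "bilin sA H"
  shows "Lf sA H (D x y) = - Lf sA (\<lambda>p. H (snd p, fst p)) (D y x)"
proof -
  have "teq sA (D x y) (tscale (-1) (tflip (D y x)))"
    using db unfolding double_bracket_def by blast
  then show ?thesis
    using Lf_resp[OF _ finD _ assms] Lf_smul(1)[OF Lf_tflip(2)[OF finD], of H "-1"]
      Lf_smul(2)[OF Lf_tflip(2)[OF finD], of "-1"]
      Lf_tflip(1)[of H "D y x"] unfolding tscale_def by simp
qed

lemma L1_cd:
  assumes "bilin sA H"
  shows "Lf sA H (D (\<phi> c * x * \<phi> d) y) = Lf sA (\<lambda>p. H (fst p * \<phi> d, \<phi> c * snd p)) (D x y)"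
proof -
  have bs: "bilin sA (\<lambda>p. H (snd p, fst p))" by (rule bilin_swap[OF assms])
  have bs2: "bilin sA (\<lambda>p. H (snd p * \<phi> d, \<phi> c * fst p))"
    using bilin_comp[OF bs, of "\<phi> c" 1 1 "\<phi> d"] by simp
  have "Lf sA H (D (\<phi> c * x * \<phi> d) y) = - Lf sA (\<lambda>p. H (snd p, fst p)) (D y (\<phi> c * x * \<phi> d))"
    by (rule L_skew[OF assms])
  also have "\<dots> = - Lf sA (\<lambda>p. H (snd p * \<phi> d, \<phi> c * fst p)) (D y x)"
    using L2_cd[OF bs] by simp
  also have "\<dots> = Lf sA (\<lambda>p. H (fst p * \<phi> d, \<phi> c * snd p)) (D x y)"
    using L_skew[OF bs2, of y x] by simp
  finally show ?thesis .
qed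

end

theorem proposition2p5p7:
  fixes sA :: "'k::field_char_0 \<Rightarrow> 'a::ring_1 \<Rightarrow> 'a"
    and sB :: "'k \<Rightarrow> 'b::ring_1 \<Rightarrow> 'b"
    and \<phi> :: "'b \<Rightarrow> 'a"
    and D :: "'a \<Rightarrow> 'a \<Rightarrow> ('a \<times> 'a \<Rightarrow> 'k)"
    and e :: 'b and n :: nat and p q :: "nat \<Rightarrow> 'b"
    and Tr :: "'a \<Rightarrow> 'a"
  assumes "k_algebra sA" and "k_algebra sB" and "k_alg_hom sB sA \<phi>"
    and "double_bracket sA D" and "B_linear_dbr sA \<phi> D"
    and "e * e = e"
    and "(\<Sum>i<n. p i * e * q i) = 1"
    and "\<And>x. Tr x = (\<Sum>i<n. \<phi> (e * q i) * x * \<phi> (p i * e))"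
  shows "\<forall>a b. Tr (assoc_bracket sA D a b) = assoc_bracket sA D (Tr a) (Tr b)"
proof (intro allI)
  fix a b
  interpret dbr sA D \<phi>
    using assms(1,4,5) by (simp add: dbr_def kalg_def dbr_axioms_def)
  have hom: "Vector_Spaces.linear sB sA \<phi>" "\<phi> 1 = 1" "\<And>x y. \<phi> (x * y) = \<phi> x * \<phi> y"
    using assms(3) unfolding k_alg_hom_def by auto
  interpret L: Vector_Spaces.linear sB sA \<phi> by (rule hom(1))
  define t where "t i = \<phi> (e * q i)" for i
  define s where "s i = \<phi> (p i * e)" for i
  let ?m = "\<lambda>p. fst p * snd p :: 'a"
  have st: "(\<Sum>i<n. s i * t i) = 1"
  proof -
    have "(\<Sum>i<n. s i * t i) = (\<Sum>i<n. \<phi> (p i * e * q i))"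
      unfolding s_def t_def hom(3)[symmetric]
      by (intro sum.cong refl) (metis assms(6) mult.assoc)
    also have "\<dots> = \<phi> 1" by (simp add: L.sum[symmetric] assms(7))
    finally show ?thesis using hom(2) by simp
  qed
  have tm: "assoc_bracket sA D x y = Lf sA ?m (D x y)" for x y
    by (simp add: assoc_bracket_def tmult_def Lf_def)
  have TR: "Tr x = (\<Sum>i<n. t i * x * s i)" for x
    using assms(8) by (simp add: s_def t_def)
  have "Lf sA ?m (D (Tr a) (Tr b)) = (\<Sum>j<n. Lf sA ?m (D (Tr a) (t j * b * s j)))"
    unfolding TR[of b] by (rule L2_sum[OF bilin_m])
  also have "\<dots> = (\<Sum>j<n. Lf sA (\<lambda>p. t j * fst p * (snd p * s j)) (D (Tr a) b))"
    using L2_cd[OF bilin_m] by (simp add: s_def t_def)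
  also have "\<dots> = (\<Sum>j<n. \<Sum>i<n. Lf sA (\<lambda>p. t j * (fst p * s i) * (t i * snd p * s j)) (D a b))"
  proof (intro sum.cong refl)
    fix j
    have bj: "bilin sA (\<lambda>p. t j * fst p * (snd p * s j))"
      using bilin_comp[OF bilin_m, of "t j" 1 1 "s j"] by (simp add: mult.assoc)
    show "Lf sA (\<lambda>p. t j * fst p * (snd p * s j)) (D (Tr a) b) =
      (\<Sum>i<n. Lf sA (\<lambda>p. t j * (fst p * s i) * (t i * snd p * s j)) (D a b))"
      unfolding TR[of a] L1_sum[OF bj] using L1_cd[OF bj] by (simp add: s_def t_def)
  qed
  also have "\<dots> = (\<Sum>j<n. Lf sA (\<lambda>p. t j * ?m p * s j) (D a b))"
  proof (intro sum.cong refl)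
    fix j
    have hE: "(\<lambda>p. \<Sum>i<n. t j * (fst p * s i) * (t i * snd p * s j)) = (\<lambda>p. t j * ?m p * s j)"
    proof
      fix p :: "'a \<times> 'a"
      have "(\<Sum>i<n. t j * (fst p * s i) * (t i * snd p * s j)) =
         t j * fst p * (\<Sum>i<n. s i * t i) * snd p * s j"
        by (simp add: sum_distrib_left sum_distrib_right mult.assoc)
      then show "(\<Sum>i<n. t j * (fst p * s i) * (t i * snd p * s j)) = t j * ?m p * s j"
        using st by (simp add: mult.assoc)
    qed
    show "(\<Sum>i<n. Lf sA (\<lambda>p. t j * (fst p * s i) * (t i * snd p * s j)) (D a b)) =
        Lf sA (\<lambda>p. t j * ?m p * s j) (D a b)"
      using Lf_Hsum[of "\<lambda>i p. t j * (fst p * s i) * (t i * snd p * s j)" "{..<n}" "D a b"]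
      unfolding hE by (rule sym)
  qed
  also have "\<dots> = Tr (Lf sA ?m (D a b))"
    by (simp add: Lf_cd TR)
  finally show "Tr (assoc_bracket sA D a b) = assoc_bracket sA D (Tr a) (Tr b)"
    by (simp add: tm)
qed

end
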